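(* Let $L\ge 2$, $M=L^2$, and consider square $M$-QAM whose constellation points form an $L\times L$ equally spaced grid, indexed by $(k,k')\in\{0,\dots,L-1\}^2$ (in-phase index $k$, quadrature index $k'$), carrying distinct original symbols $s_{o,k,k'}$. For $s_1=s_{o,k_1,k_1'}$ and $s_2=s_{o,k_2,k_2'}$, the superposed signal (synchronous phase, equal power, no noise) is the point of the superposed constellation with index $(l,l')=(k_1+k_2,\,k_1'+k_2')\in\{0,\dots,2L-2\}^2$. Let $c:\{0,\dots,2L-2\}^2\to\mathcal{S}$ be any map and define $C(s_{o,k_1,k_1'},s_{o,k_2,k_2'})=c(k_1+k_2,k_1'+k_2')$. Then $C$ satisfies the Exclusive Law (for all $s_1'\ne s_1$ and all $s_2$, $C(s_1',s_2)\ne C(s_1,s_2)$; and for all $s_2'\ne s_2$ and all $s_1$, $C(s_1,s_2')\ne C(s_1,s_2)$) if and only if the superposed constellation points in any $L$ by $L$ square are mapped to distinct symbols, i.e. for every $(a,b)\in\{0,\dots,L-1\}^2$ the restriction of $c$ to $\{a,\dots,a+L-1\}\times\{b,\dots,b+L-1\}$ is injective.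
   Context: The Exclusive Law is taken as the necessary and sufficient condition for unique decodability at destinations that know one of the two source symbols and receive the coded symbol $C(s_1,s_2)$ from the relay. *)

theory Defs
  imports Main
begin

definition qam_grid :: "nat \<Rightarrow> (nat \<times> nat) set" where
  "qam_grid L = {0..<L} \<times> {0..<L}"

definition exclusive_law :: "'s set \<Rightarrow> ('s \<Rightarrow> 's \<Rightarrow> 'c) \<Rightarrow> bool" where
  "exclusive_law S C \<longleftrightarrow>
     (\<forall>s1\<in>S. \<forall>s1'\<in>S. \<forall>s2\<in>S. s1' \<noteq> s1 \<longrightarrow> C s1' s2 \<noteq> C s1 s2) \<and>
     (\<forall>s1\<in>S. \<forall>s2\<in>S. \<forall>s2'\<in>S. s2' \<noteq> s2 \<longrightarrow> C s1 s2' \<noteq> C s1 s2)"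

end

theory Submission
  imports Defs
begin

theorem corollary1:
  fixes L :: nat
    and so :: "nat \<times> nat \<Rightarrow> 's"
    and c :: "nat \<times> nat \<Rightarrow> 'c"
    and C :: "'s \<Rightarrow> 's \<Rightarrow> 'c"
  assumes "L \<ge> 2"
    and "inj_on so (qam_grid L)"
    and "\<forall>k1 k1' k2 k2'. (k1, k1') \<in> qam_grid L \<longrightarrow> (k2, k2') \<in> qam_grid L \<longrightarrow>
           C (so (k1, k1')) (so (k2, k2')) = c (k1 + k2, k1' + k2')"
  shows "exclusive_law (so ` qam_grid L) C \<longleftrightarrow>
    (\<forall>a b. a < L \<longrightarrow> b < L \<longrightarrow> inj_on c ({a..a + L - 1} \<times> {b..b + L - 1}))"
proof
  assume E: "exclusive_law (so ` qam_grid L) C"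
  show "\<forall>a b. a < L \<longrightarrow> b < L \<longrightarrow> inj_on c ({a..a + L - 1} \<times> {b..b + L - 1})"
  proof (intro allI impI inj_onI)
    fix a b p q
    assume ab: "a < L" "b < L"
      and p: "p \<in> {a..a + L - 1} \<times> {b..b + L - 1}"
      and q: "q \<in> {a..a + L - 1} \<times> {b..b + L - 1}" and eq: "c p = c q"
    obtain i j where pij: "p = (a+i, b+j)" "i < L" "j < L"
      proof -
      obtain u w where "p = (u,w)" by (cases p)
      with p assms(1) show ?thesis
        by (intro that[of "u - a" "w - b"]) auto
    qed
    obtain i' j' where qij: "q = (a+i', b+j')" "i' < L" "j' < L"
      proof -
      obtain u w where "q = (u,w)" by (cases q)
      with q assms(1) show ?thesis
        by (intro that[of "u - a" "w - b"]) auto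
    qed
    have g: "(i,j) \<in> qam_grid L" "(i',j') \<in> qam_grid L" "(a,b) \<in> qam_grid L"
      using pij qij ab by (auto simp: qam_grid_def)
    have C1: "C (so (i,j)) (so (a,b)) = c p" using assms(3) g pij by (simp add: add.commute)
    have C2: "C (so (i',j')) (so (a,b)) = c q" using assms(3) g qij by (simp add: add.commute)
    show "p = q"
    proof (rule ccontr)
      assume "p \<noteq> q"
      then have "(i',j') \<noteq> (i,j)" using pij qij by auto
      then have "so (i',j') \<noteq> so (i,j)" using assms(2) g inj_on_eq_iff by metis
      then have "C (so (i',j')) (so (a,b)) \<noteq> C (so (i,j)) (so (a,b))"
        using E g unfolding exclusive_law_def by blast
      then show False using C1 C2 eq by simp
    qed
  qed
next
  assume I: "\<forall>a b. a < L \<longrightarrow> b < L \<longrightarrow> inj_on c ({a..a + L - 1} \<times> {b..b + L - 1})"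
  have sq: "x \<in> qam_grid L \<Longrightarrow> (fst x + a, snd x + b) \<in> {a..a + L - 1} \<times> {b..b + L - 1}" for x a b
    by (auto simp: qam_grid_def)
  show "exclusive_law (so ` qam_grid L) C"
    unfolding exclusive_law_def
  proof (intro conjI ballI impI)
    fix s1 s1' s2 assume s: "s1 \<in> so ` qam_grid L" "s1' \<in> so ` qam_grid L" "s2 \<in> so ` qam_grid L"
      and ne: "s1' \<noteq> s1"
    obtain x where x: "x \<in> qam_grid L" "s1 = so x" using s by auto
    obtain y where y: "y \<in> qam_grid L" "s1' = so y" using s by auto
    obtain z where z: "z \<in> qam_grid L" "s2 = so z" using s by auto
    have zl: "fst z < L" "snd z < L" using z by (auto simp: qam_grid_def)
    have "x \<noteq> y" using x y ne by auto
    then have "(fst y + fst z, snd y + snd z) \<noteq> (fst x + fst z, snd x + snd z)"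
      by (auto simp: prod_eq_iff)
    then have "c (fst y + fst z, snd y + snd z) \<noteq> c (fst x + fst z, snd x + snd z)"
      using I zl sq[OF x(1)] sq[OF y(1)] inj_on_eq_iff by metis
    moreover have "C s1' s2 = c (fst y + fst z, snd y + snd z)"
      using assms(3) y z by (metis prod.collapse)
    moreover have "C s1 s2 = c (fst x + fst z, snd x + snd z)"
      using assms(3) x z by (metis prod.collapse)
    ultimately show "C s1' s2 \<noteq> C s1 s2" by simp
  next
    fix s1 s2 s2' assume s: "s1 \<in> so ` qam_grid L" "s2 \<in> so ` qam_grid L" "s2' \<in> so ` qam_grid L"
      and ne: "s2' \<noteq> s2"
    obtain x where x: "x \<in> qam_grid L" "s2 = so x" using s by auto
    obtain y where y: "y \<in> qam_grid L" "s2' = so y" using s by auto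
    obtain z where z: "z \<in> qam_grid L" "s1 = so z" using s by auto
    have zl: "fst z < L" "snd z < L" using z by (auto simp: qam_grid_def)
    have "x \<noteq> y" using x y ne by auto
    then have "(fst y + fst z, snd y + snd z) \<noteq> (fst x + fst z, snd x + snd z)"
      by (auto simp: prod_eq_iff)
    then have "c (fst y + fst z, snd y + snd z) \<noteq> c (fst x + fst z, snd x + snd z)"
      using I zl sq[OF x(1)] sq[OF y(1)] inj_on_eq_iff by metis
    moreover have "C s1 s2' = c (fst y + fst z, snd y + snd z)"
      using assms(3) y z by (metis prod.collapse add.commute)
    moreover have "C s1 s2 = c (fst x + fst z, snd x + snd z)"
      using assms(3) x z by (metis prod.collapse add.commute)
    ultimately show "C s1 s2' \<noteq> C s1 s2" by simp
  qed
qed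

end
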